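(* Let $\alpha \in (0,1)$, $\delta \in (0,1)$, $\epsilon \in (0,1/2)$ and $N_P, N_A \in \mathbb{N}$ satisfy $N_P/N_A \le 1/2 - \epsilon$ and $N_P \ge \max\left(\log(1/\delta)/(2\epsilon^2),\, 8\log(1/\alpha)/\epsilon^2\right)$. Let $v_1,\dots,v_{N_A}$ be i.i.d. $\mathcal{N}(0,1)$ (i.e. the true mean improvement is $\mu = 0$). Then, with probability at least $1-\delta$, there exists a subset $\mathcal{D}_P \subseteq \{1,\dots,N_A\}$ with $|\mathcal{D}_P| = N_P$ such that $p_P(\hat{\mu}_P) \le \alpha$, where $\hat{\mu}_P = \frac{1}{N_P}\sum_{i\in\mathcal{D}_P} v_i$.
   Context: Setting: there are $N_A$ datasets indexed by $\{1,\dots,N_A\}$; the measured improvement of a new algorithm on dataset $i$ is $v_i$, with the $v_i$ i.i.d. $\mathcal{N}(\mu,1)$. A reporter who sees all $v_i$ may choose any subset $\mathcal{D}_P$ of size $N_P$ (depending on the $v_i$). The standard one-sided $p$-value is $p_P(\hat{\mu}_P) = \bar{\Phi}(\hat{\mu}_P\sqrt{N_P})$, where $\bar{\Phi}(x)=\int_x^\infty \frac{1}{\sqrt{2\pi}}e^{-t^2/2}\,dt$ is the standard normal survival function. *)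

theory Defs
  imports "HOL-Probability.Probability"
begin

definition Phi_bar :: "real \<Rightarrow> real" where
  "Phi_bar x = (LBINT t:{x<..}. std_normal_density t)"

definition p_value :: "nat \<Rightarrow> real \<Rightarrow> real" where
  "p_value NP mu_hat = Phi_bar (mu_hat * sqrt (real NP))"

definition iid_normals :: "nat \<Rightarrow> (nat \<Rightarrow> real) measure" where
  "iid_normals NA = PiM {1..NA} (\<lambda>_. std_normal_distribution)"

end

theory Submission
  imports Defs
begin


lemma half_std_normal:
  "has_bochner_integral lborel (\<lambda>x. indicator {0..} x * std_normal_density x) (1/2)"
proof -
  have c: "sqrt 2 \<noteq> (0::real)" by simp
  have A: "has_bochner_integral lborel (\<lambda>x. (1 / sqrt (2*pi)) * (indicator {0..} x *\<^sub>R exp (- x\<^sup>2))) ((1 / sqrt (2*pi)) * (sqrt pi / 2))"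
    by (intro has_bochner_integral_mult_right gaussian_moment_0)
  have e2: "(\<lambda>x. (1 / sqrt (2*pi)) * (indicator {0..} x *\<^sub>R exp (- x\<^sup>2))) =
     (\<lambda>x. (\<lambda>x. indicator {0..} x * std_normal_density x) (0 + sqrt 2 * x))"
    by (auto simp: fun_eq_iff std_normal_density_def indicator_def power_mult_distrib zero_le_mult_iff)
  have e3: "(1 / sqrt (2*pi)) * (sqrt pi / 2) = (1/2::real) /\<^sub>R \<bar>sqrt 2\<bar>"
  proof -
    have "sqrt (2*pi) = sqrt 2 * sqrt pi" by (simp add: real_sqrt_mult)
    then show ?thesis by (simp add: field_simps)
  qed
  have h: "has_bochner_integral lborel (\<lambda>x. (\<lambda>x. indicator {0..} x * std_normal_density x) (0 + sqrt 2 * x)) ((1/2::real) /\<^sub>R \<bar>sqrt 2\<bar>)"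
    using A unfolding e2 e3 .
  show ?thesis
    using lborel_has_bochner_integral_real_affine_iff[OF c, of "\<lambda>x. indicator {0..} x * std_normal_density x" "1/2" 0] h
    by blast
qed

lemma Phi_bar_alt: "Phi_bar x = (\<integral>t. indicator {x<..} t * std_normal_density t \<partial>lborel)"
  unfolding Phi_bar_def set_lebesgue_integral_def by simp

lemma int_ind_normal: "integrable lborel (\<lambda>t. indicator A t * std_normal_density t)" if "A \<in> sets borel"
  using integrable_real_mult_indicator[of A lborel std_normal_density] that by (simp add: mult.commute)

lemma Phi_bar_anti: "x \<le> y \<Longrightarrow> Phi_bar y \<le> Phi_bar x"
  unfolding Phi_bar_alt
  by (intro integral_mono int_ind_normal) (auto simp: indicator_def)

lemma Phi_bar_exp: assumes "0 \<le> x" shows "Phi_bar x \<le> exp (- x\<^sup>2 / 2)"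
proof -
  have "Phi_bar x \<le> (\<integral>t. exp (- x\<^sup>2 / 2) * normal_density x 1 t \<partial>lborel)"
    unfolding Phi_bar_alt
  proof (intro integral_mono int_ind_normal integrable_mult_right integrable_normal_density)
    fix t show "indicator {x<..} t * std_normal_density t \<le> exp (- x\<^sup>2 / 2) * normal_density x 1 t"
    proof (cases "x < t")
      case True
      have "exp (- t\<^sup>2 / 2) \<le> exp (- x\<^sup>2 / 2) * exp (- (t - x)\<^sup>2 / 2)"
        unfolding exp_add[symmetric] using True assms mult_right_mono[of x t x] by (simp add: power2_eq_square algebra_simps)
      then show ?thesis using True
        by (simp add: std_normal_density_def normal_density_def divide_right_mono)
    qed (auto simp: normal_density_def)
  qed auto
  also have "\<dots> = exp (- x\<^sup>2 / 2)" by simp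
  finally show ?thesis .
qed

lemma Phi_bar_lower: assumes "0 \<le> x" shows "Phi_bar x \<ge> 1/2 - x/2"
proof -
  have i1: "integrable lborel (\<lambda>t. indicator {0..x} t * (1/2::real))"
    using assms by (intro integrable_mult_left integrable_real_indicator) auto
  have "(\<integral>t. indicator {0..} t * std_normal_density t - indicator {0..x} t * (1/2) \<partial>lborel) \<le> Phi_bar x"
    unfolding Phi_bar_alt
  proof (rule integral_mono)
    have "integrable lborel (\<lambda>t. indicator {0..} t * std_normal_density t)"
      using half_std_normal by (simp add: has_bochner_integral_iff)
    then show "integrable lborel (\<lambda>t. indicator {0..} t * std_normal_density t - indicator {0..x} t * (1/2))"
      using i1 by (rule Bochner_Integration.integrable_diff)
    show "integrable lborel (\<lambda>t. indicator {x<..} t * std_normal_density t)"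
      by (rule int_ind_normal) simp
    fix t
    have s: "std_normal_density t \<le> 1/2"
    proof -
      have "exp (- t\<^sup>2 / 2) \<le> 1" by simp
      moreover have "1 / sqrt (2*pi) \<le> 1/2"
      proof -
        have "2 \<le> sqrt (2*pi)" using pi_gt3 by (simp add: real_le_rsqrt)
        then show ?thesis by (simp add: field_simps)
      qed
      ultimately have "1 / sqrt (2*pi) * exp (- t\<^sup>2 / 2) \<le> 1/2 * 1"
        by (intro mult_mono) auto
      then show ?thesis unfolding std_normal_density_def by simp
    qed
    show "indicator {0..} t * std_normal_density t - indicator {0..x} t * (1/2) \<le> indicator {x<..} t * std_normal_density t"
      using s assms by (cases "t < 0"; cases "t \<le> x") (simp_all add: indicator_def)
  qed
  also have "(\<integral>t. indicator {0..} t * std_normal_density t - indicator {0..x} t * (1/2) \<partial>lborel) = 1/2 - x/2"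
  proof -
    have i0: "integrable lborel (\<lambda>t. indicator {0..} t * std_normal_density t)"
      using half_std_normal by (simp add: has_bochner_integral_iff)
    have v0: "(\<integral>t. indicator {0..} t * std_normal_density t \<partial>lborel) = 1/2"
      using half_std_normal by (simp add: has_bochner_integral_iff)
    have v1: "(\<integral>t. indicator {0..x} t * (1/2) \<partial>lborel) = x/2"
    proof -
      have "(\<integral>t. indicator {0..x} t * (1/2) \<partial>lborel) = (\<integral>t. indicator {0..x} t \<partial>lborel) * (1/2::real)"
        by (rule integral_mult_left_zero)
      also have "(\<integral>t. indicator {0..x} t \<partial>lborel) = (x::real)"
        using assms by (simp add: integral_indicator)
      finally show ?thesis by simp
    qed
    show ?thesis
      by (simp only: Bochner_Integration.integral_diff[OF i0 i1] v0 v1)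
  qed
  finally show ?thesis .
qed



lemma sets_N: "sets std_normal_distribution = sets borel" by simp

lemma measure_N: "measure std_normal_distribution {t<..} = Phi_bar t"
proof -
  have "measure std_normal_distribution {t<..} = (\<integral>x. indicator {t<..} x \<partial>std_normal_distribution)"
    by simp
  also have "\<dots> = (\<integral>x. std_normal_density x *\<^sub>R indicator {t<..} x \<partial>lborel)"
    by (rule integral_density) auto
  also have "\<dots> = Phi_bar t"
    unfolding Phi_bar_alt by (simp add: mult.commute)
  finally show ?thesis .
qed

lemma prob_iid: "prob_space (iid_normals NA)"
  unfolding iid_normals_def by (intro prob_space_PiM) (simp add: prob_space_normal_density)

lemma comp_meas: "i \<in> {1..NA} \<Longrightarrow> (\<lambda>v. v i) \<in> borel_measurable (iid_normals NA)"
  unfolding iid_normals_def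
  using measurable_component_singleton[of i "{1..NA}" "\<lambda>_. std_normal_distribution"]
  by (simp add: measurable_cong_sets[OF refl sets_N])

lemma distr_comp: "i \<in> {1..NA} \<Longrightarrow> distr (iid_normals NA) borel (\<lambda>v. v i) = std_normal_distribution"
proof -
  assume i: "i \<in> {1..NA}"
  have "distr (iid_normals NA) borel (\<lambda>v. v i) = distr (iid_normals NA) std_normal_distribution (\<lambda>v. v i)"
    by (rule distr_cong) auto
  also have "\<dots> = std_normal_distribution"
    unfolding iid_normals_def by (rule distr_PiM_component[OF _ i]) (simp add: prob_space_normal_density)
  finally show ?thesis .
qed

lemma indep_coords:
  assumes "NA > 0"
  shows "prob_space.indep_vars (iid_normals NA) (\<lambda>_. borel) (\<lambda>i v. v i) {1..NA}"
proof -
  interpret prob_space "iid_normals NA" by (rule prob_iid)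
  have ne: "{1..NA} \<noteq> {}" using assms by simp
  show ?thesis
  proof (subst indep_vars_iff_distr_eq_PiM'[OF ne])
    show "\<And>i. i \<in> {1..NA} \<Longrightarrow> random_variable borel (\<lambda>v. v i)" by (rule comp_meas)
    have "distr (iid_normals NA) (\<Pi>\<^sub>M i\<in>{1..NA}. borel) (\<lambda>x. \<lambda>i\<in>{1..NA}. x i)
        = distr (iid_normals NA) (iid_normals NA) (\<lambda>x. x)"
    proof -
      have "sets (\<Pi>\<^sub>M i\<in>{1..NA}. borel) = sets (\<Pi>\<^sub>M i\<in>{1..NA}. std_normal_distribution)"
        by (rule sets_PiM_cong) simp_all
      then show ?thesis unfolding iid_normals_def
        by (intro distr_cong) (auto simp: space_PiM)
    qed
    also have "\<dots> = iid_normals NA" by (rule distr_id2) simp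
    also have "\<dots> = (\<Pi>\<^sub>M i\<in>{1..NA}. distr (iid_normals NA) borel (\<lambda>v. v i))"
      unfolding iid_normals_def[of NA, symmetric]
      by (subst iid_normals_def) (rule PiM_cong, simp, simp add: distr_comp)
    finally show "distr (iid_normals NA) (\<Pi>\<^sub>M i\<in>{1..NA}. borel) (\<lambda>x. \<lambda>i\<in>{1..NA}. x i)
        = (\<Pi>\<^sub>M i\<in>{1..NA}. distr (iid_normals NA) borel (\<lambda>v. v i))" .
  qed
qed

lemma expect_ind:
  assumes "i \<in> {1..NA}"
  shows "prob_space.expectation (iid_normals NA) (\<lambda>v. indicator {t<..} (v i) :: real) = Phi_bar t"
proof -
  have "(\<integral>v. indicator {t<..} (v i) \<partial>iid_normals NA) = (\<integral>x. indicator {t<..} x \<partial>distr (iid_normals NA) borel (\<lambda>v. v i) :: real)"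
    by (subst integral_distr) (auto intro: comp_meas[OF assms])
  also have "\<dots> = measure std_normal_distribution {t<..}"
    by (simp add: distr_comp[OF assms])
  finally show ?thesis by (simp add: measure_N)
qed

lemma Phi_bar_meas: "Phi_bar \<in> borel_measurable borel"
proof -
  have "mono (\<lambda>x. - Phi_bar x)" by (auto simp: mono_def intro: Phi_bar_anti)
  then have "(\<lambda>x. - Phi_bar x) \<in> borel_measurable borel" by (rule borel_measurable_mono)
  then have "(\<lambda>x. - (- Phi_bar x)) \<in> borel_measurable borel" by measurable
  then show ?thesis by simp
qed



theorem theorem2:
  fixes \<alpha> \<delta> \<epsilon> :: real and NP NA :: nat
  assumes "0 < \<alpha>" "\<alpha> < 1" and "0 < \<delta>" "\<delta> < 1"
    and "0 < \<epsilon>" "\<epsilon> < 1/2"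
    and "real NP \<le> (1/2 - \<epsilon>) * real NA"
    and "real NP \<ge> max (ln (1/\<delta>) / (2 * \<epsilon>^2)) (8 * ln (1/\<alpha>) / \<epsilon>^2)"
  shows "measure (iid_normals NA)
           {v \<in> space (iid_normals NA).
              \<exists>D \<subseteq> {1..NA}. card D = NP \<and>
                 p_value NP ((\<Sum>i\<in>D. v i) / real NP) \<le> \<alpha>} \<ge> 1 - \<delta>"
proof -
  define M where "M = iid_normals NA"
  define I where "I = {1..NA}"
  define t where "t = \<epsilon> / 2"
  define Y where "Y = (\<lambda>i (v::nat \<Rightarrow> real). indicator {t<..} (v i) :: real)"
  interpret P: prob_space M unfolding M_def by (rule prob_iid)
  have la: "ln (1/\<alpha>) > 0" using assms(1,2) by simp
  have ld: "ln (1/\<delta>) > 0" using assms(3,4) by simp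
  have e2: "\<epsilon>^2 > 0" using assms(5) by simp
  have NP1: "8 * ln (1/\<alpha>) / \<epsilon>^2 \<le> real NP" using assms(8) by simp
  have NP2: "ln (1/\<delta>) / (2 * \<epsilon>^2) \<le> real NP" using assms(8) by simp
  have NPa: "ln (1/\<alpha>) \<le> \<epsilon>^2 * real NP / 8" using NP1 e2 by (simp add: field_simps)
  have NPd: "ln (1/\<delta>) \<le> 2 * \<epsilon>^2 * real NP" using NP2 e2 by (simp add: field_simps)
  have NPpos: "real NP > 0" using NP1 la e2 by (smt (verit) divide_pos_pos)
  have NAbig: "2 * real NP \<le> real NA"
  proof -
    have "\<epsilon> * real NA \<ge> 0" using assms(5) by simp
    then show ?thesis using assms(7) by (simp add: algebra_simps)
  qed
  have NApos: "NA > 0" using NAbig NPpos by simp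
  have finI: "finite I" unfolding I_def by simp
  have cardI: "card I = NA" unfolding I_def by simp

  define \<mu> where "\<mu> = (\<Sum>i\<in>I. P.expectation (Y i))"
  have \<mu>eq: "\<mu> = real NA * Phi_bar t"
    unfolding \<mu>_def Y_def M_def using expect_ind[of _ NA t] cardI by (simp add: I_def)
  have ic: "P.indep_vars (\<lambda>_. borel) (\<lambda>i v. v i) I"
    using indep_coords[OF NApos] unfolding M_def I_def .
  have indY: "P.indep_vars (\<lambda>_. borel) Y I"
  proof -
    have "P.indep_vars (\<lambda>_. borel) (\<lambda>i v. (\<lambda>x. indicator {t<..} x :: real) ((\<lambda>v. v i) v)) I"
      by (rule P.indep_vars_compose2[OF ic]) (rule borel_measurable_indicator, simp)
    then show ?thesis unfolding Y_def by simp
  qed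
  have AEY: "\<And>i. i \<in> I \<Longrightarrow> AE x in M. Y i x \<in> {0..1}"
    by (rule AE_I2) (simp add: Y_def indicator_def)
  have loc: "Hoeffding_ineq M I Y (\<lambda>_. 0) (\<lambda>_. 1)"
    unfolding Hoeffding_ineq_def indep_interval_bounded_random_variables_def
      indep_interval_bounded_random_variables_axioms_def
    using P.prob_space_axioms finI indY AEY by blast
  define eh where "eh = \<mu> - real NP"
  have pt: "Phi_bar t \<ge> 1/2 - \<epsilon>/4" using Phi_bar_lower[of t] assms(5) by (simp add: t_def)
  have ehb: "eh \<ge> 3/4 * \<epsilon> * real NA"
  proof -
    have "\<mu> \<ge> real NA * (1/2 - \<epsilon>/4)" unfolding \<mu>eq using pt by (intro mult_left_mono) auto
    then show ?thesis unfolding eh_def using assms(7) by (simp add: algebra_simps)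
  qed
  have "3/4 * \<epsilon> * real NA \<ge> 0" using assms(5) by simp
  then have eh0: "eh \<ge> 0" using ehb by linarith
  have sumb: "(\<Sum>i\<in>I. ((1::real) - 0)\<^sup>2) = real NA" using cardI by simp
  have hoef: "P.prob {x\<in>space M. (\<Sum>i\<in>I. Y i x) \<le> \<mu> - eh} \<le> exp (-2 * eh\<^sup>2 / real NA)"
    using Hoeffding_ineq.Hoeffding_ineq_le[OF loc eh0] NApos sumb unfolding \<mu>_def by simp
  have "exp (-2 * eh\<^sup>2 / real NA) \<le> exp (- (2 * \<epsilon>^2 * real NP))"
  proof -
    have "(3/4 * \<epsilon> * real NA)^2 \<le> eh^2"
      using ehb assms(5) by (intro power_mono) auto
    then have "9/16 * \<epsilon>^2 * real NA * real NA \<le> eh^2" by (simp add: power2_eq_square algebra_simps)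
    moreover have "2 * \<epsilon>^2 * real NP * real NA \<le> 2 * (9/16 * \<epsilon>^2 * real NA * real NA)"
    proof -
      have h1: "\<epsilon>^2 * real NA * (2 * real NP) \<le> \<epsilon>^2 * real NA * real NA"
        using NAbig e2 by (intro mult_left_mono) auto
      have h2: "0 \<le> \<epsilon>^2 * real NA * real NA" by simp
      have h3: "2 * (9/16 * \<epsilon>^2 * real NA * real NA) = \<epsilon>^2 * real NA * real NA + (\<epsilon>^2 * real NA * real NA) / 8"
        by (simp add: algebra_simps)
      have h4: "2 * \<epsilon>^2 * real NP * real NA = \<epsilon>^2 * real NA * (2 * real NP)"
        by (simp add: algebra_simps)
      show ?thesis using h1 h2 h3 h4 by linarith
    qed
    ultimately have "2 * \<epsilon>^2 * real NP * real NA \<le> 2 * eh\<^sup>2" by linarith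
    then have "2 * \<epsilon>^2 * real NP \<le> 2 * eh\<^sup>2 / real NA"
      using NApos by (simp add: pos_le_divide_eq)
    then show ?thesis by simp
  qed
  also have "\<dots> \<le> exp (- ln (1/\<delta>))" using NPd by simp
  also have "\<dots> = \<delta>" using assms(3) by (simp add: ln_div)
  finally have bad: "P.prob {x\<in>space M. (\<Sum>i\<in>I. Y i x) \<le> real NP} \<le> \<delta>"
    using hoef unfolding eh_def by simp

  define G where "G = {x\<in>space M. real NP \<le> (\<Sum>i\<in>I. Y i x)}"
  have Ymeas: "\<And>i. i \<in> I \<Longrightarrow> Y i \<in> borel_measurable M"
  proof -
    fix i assume iI: "i \<in> I"
    have "(\<lambda>v. v i) \<in> borel_measurable M" using comp_meas[of i NA] iI unfolding M_def I_def by simp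
    then show "Y i \<in> borel_measurable M" unfolding Y_def
      by (rule measurable_compose) (rule borel_measurable_indicator, simp)
  qed
  have Smeas: "(\<lambda>x. \<Sum>i\<in>I. Y i x) \<in> borel_measurable M"
    using Ymeas by (intro borel_measurable_sum) auto
  have Gsets: "G \<in> P.events" unfolding G_def using Smeas by measurable
  have "space M - G \<subseteq> {x\<in>space M. (\<Sum>i\<in>I. Y i x) \<le> real NP}" unfolding G_def by auto
  then have "P.prob (space M - G) \<le> \<delta>"
  proof -
    have "{x\<in>space M. (\<Sum>i\<in>I. Y i x) \<le> real NP} \<in> P.events" using Smeas by measurable
    then show ?thesis using bad P.finite_measure_mono[OF \<open>space M - G \<subseteq> _\<close>] by linarith
  qed
  then have PG: "P.prob G \<ge> 1 - \<delta>" using P.prob_compl[OF Gsets] by simp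

  define T where "T = {v \<in> space M. \<exists>D \<subseteq> I. card D = NP \<and> p_value NP ((\<Sum>i\<in>D. v i) / real NP) \<le> \<alpha>}"
  have GT: "G \<subseteq> T"
  proof
    fix v assume vG: "v \<in> G"
    define S where "S = {i\<in>I. t < v i}"
    have "(\<Sum>i\<in>I. Y i v) = real (card S)"
    proof -
      have "(\<Sum>i\<in>I. Y i v) = (\<Sum>i\<in>I. indicator S i)"
        unfolding Y_def S_def by (intro sum.cong) (auto simp: indicator_def)
      also have "\<dots> = real (card (I \<inter> S))" 
      proof -
        have "(\<Sum>i\<in>I \<inter> S. (1::real)) = (\<Sum>i\<in>I. if i \<in> S then 1 else 0)"
          by (rule sum.inter_restrict[OF finI])
        then show ?thesis unfolding indicator_def by (simp add: of_bool_def)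
      qed
      finally show ?thesis by (simp add: S_def Int_def)
    qed
    then have "NP \<le> card S" using vG unfolding G_def by simp
    then obtain D where D: "D \<subseteq> S" "card D = NP" "finite D" by (rule obtain_subset_with_card_n)
    have "real NP * t \<le> (\<Sum>i\<in>D. v i)"
    proof -
      have "(\<Sum>i\<in>D. t) \<le> (\<Sum>i\<in>D. v i)" using D(1) by (intro sum_mono) (auto simp: S_def)
      then show ?thesis using D by simp
    qed
    then have m: "t \<le> (\<Sum>i\<in>D. v i) / real NP" using NPpos by (simp add: field_simps)
    have t0: "0 \<le> t" using assms(5) by (simp add: t_def)
    have pv: "p_value NP ((\<Sum>i\<in>D. v i) / real NP) \<le> \<alpha>"
    proof -
      have "p_value NP ((\<Sum>i\<in>D. v i) / real NP) \<le> Phi_bar (t * sqrt (real NP))"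
        unfolding p_value_def by (intro Phi_bar_anti mult_right_mono m) auto
      also have "\<dots> \<le> exp (- (t * sqrt (real NP))\<^sup>2 / 2)" using t0 by (intro Phi_bar_exp) auto
      also have "(t * sqrt (real NP))\<^sup>2 = \<epsilon>^2 * real NP / 4"
        by (simp add: t_def power_mult_distrib power_divide)
      also have "exp (- (\<epsilon>^2 * real NP / 4) / 2) \<le> exp (- ln (1/\<alpha>))" using NPa by simp
      also have "\<dots> = \<alpha>" using assms(1) by (simp add: ln_div)
      finally show ?thesis .
    qed
    have DI: "D \<subseteq> I" using D(1) unfolding S_def by auto
    have vM: "v \<in> space M" using vG unfolding G_def by simp
    show "v \<in> T" unfolding T_def using vM DI D(2) pv by blast
  qed
  have Tsets: "T \<in> P.events"
  proof -
    have "T = {v \<in> space M. \<exists>D\<in>Pow I. card D = NP \<and> p_value NP ((\<Sum>i\<in>D. v i) / real NP) \<le> \<alpha>}"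
      unfolding T_def by auto
    also have "\<dots> \<in> P.events"
    proof (rule sets.sets_Collect_finite_Ex)
      show "finite (Pow I)" using finI by simp
      fix D assume "D \<in> Pow I"
      then have DI: "D \<subseteq> I" by simp
      have "(\<lambda>v. \<Sum>i\<in>D. v i) \<in> borel_measurable M"
      proof (rule borel_measurable_sum)
        fix i assume "i \<in> D"
        then have "i \<in> {1..NA}" using DI unfolding I_def by auto
        then show "(\<lambda>v. v i) \<in> borel_measurable M" unfolding M_def by (rule comp_meas)
      qed
      note sm = this
      have cont: "(\<lambda>x::real. x / real NP * sqrt (real NP)) \<in> borel_measurable borel"
        using NPpos by (intro borel_measurable_continuous_onI continuous_intros) auto
      have pm: "(\<lambda>x::real. Phi_bar (x / real NP * sqrt (real NP))) \<in> borel_measurable borel"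
        using measurable_compose[OF cont Phi_bar_meas] by (simp add: o_def)
      have "(\<lambda>v. p_value NP ((\<Sum>i\<in>D. v i) / real NP)) \<in> borel_measurable M"
        unfolding p_value_def using measurable_compose[OF sm pm] by (simp add: o_def)
      then have lev: "{v \<in> space M. p_value NP ((\<Sum>i\<in>D. v i) / real NP) \<le> \<alpha>} \<in> P.events"
        unfolding borel_measurable_iff_le by blast
      show "{v \<in> space M. card D = NP \<and> p_value NP ((\<Sum>i\<in>D. v i) / real NP) \<le> \<alpha>} \<in> P.events"
      proof (cases "card D = NP")
        case True then show ?thesis using lev by simp
      next
        case False then show ?thesis by simp
      qed
    qed
    finally show ?thesis .
  qed
  have "1 - \<delta> \<le> P.prob T" using PG P.finite_measure_mono[OF GT Tsets] by simp
  then show ?thesis unfolding T_def M_def I_def .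
qed

end
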